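(* Let $n\ge1$ and $r\ge0$. Then \[ \sum_{\lambda\in\mathcal P_r(n)}\big(d^\lambda(q)\big)^2=(1+q)^n\,n!. \]
   Context: Partitions are identified with Young diagrams. A domino is a set of two cells sharing an edge (vertical if in one column). $\delta_r=(r,r-1,\dots,1)$; every partition has a 2-core (obtained by repeatedly removing dominoes while staying a partition) equal to a unique $\delta_r$; $\mathcal P_r(n)$ is the set of partitions with 2-core $\delta_r$ and size $|\delta_r|+2n$. A standard domino tableau of shape $\lambda\in\mathcal P_r(n)$ is a chain $\delta_r=\lambda^0\subset\cdots\subset\lambda^n=\lambda$ with each $\lambda^k/\lambda^{k-1}$ a domino; its spin $sp(D)$ is half the number of vertical dominoes. $d^\lambda(q)=\sum_D q^{sp(D)}$, over all standard domino tableaux $D$ of shape $\lambda$. *)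

theory Defs
  imports Complex_Main
begin

text \<open>Young diagrams: finite sets of cells (row, column), 0-indexed, closed downwards.\<close>

type_synonym cell = "nat \<times> nat"

definition is_partition :: "cell set \<Rightarrow> bool" where
  "is_partition lam \<longleftrightarrow> finite lam \<and>
     (\<forall>i j i' j'. (i, j) \<in> lam \<longrightarrow> i' \<le> i \<longrightarrow> j' \<le> j \<longrightarrow> (i', j') \<in> lam)"

text \<open>delta r = (r, r-1, ..., 1): row i has r - i cells.\<close>
definition delta :: "nat \<Rightarrow> cell set" where
  "delta r = {(i, j). i + j < r}"

definition vertical_domino :: "cell set \<Rightarrow> bool" where
  "vertical_domino S \<longleftrightarrow> (\<exists>i j. S = {(i, j), (Suc i, j)})"

definition horizontal_domino :: "cell set \<Rightarrow> bool" where
  "horizontal_domino S \<longleftrightarrow> (\<exists>i j. S = {(i, j), (i, Suc j)})"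

definition is_domino :: "cell set \<Rightarrow> bool" where
  "is_domino S \<longleftrightarrow> vertical_domino S \<or> horizontal_domino S"

definition domino_step :: "cell set \<Rightarrow> cell set \<Rightarrow> bool" where
  "domino_step mu nu \<longleftrightarrow> is_partition mu \<and> is_partition nu \<and> mu \<subseteq> nu \<and> is_domino (nu - mu)"

text \<open>The 2-core of lambda is delta r: delta r is obtained from lambda by repeatedly
  removing dominoes while staying a partition.\<close>
definition has_2core :: "nat \<Rightarrow> cell set \<Rightarrow> bool" where
  "has_2core r lam \<longleftrightarrow> is_partition lam \<and> domino_step\<^sup>*\<^sup>* (delta r) lam"

definition P :: "nat \<Rightarrow> nat \<Rightarrow> cell set set" where
  "P r n = {lam. is_partition lam \<and> has_2core r lam \<and> card lam = card (delta r) + 2 * n}"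

text \<open>Standard domino tableaux of shape lambda in P r n: chains
  delta r = D!0 \<subset> ... \<subset> D!n = lambda of partitions with domino differences.\<close>
definition sdt :: "nat \<Rightarrow> nat \<Rightarrow> cell set \<Rightarrow> cell set list set" where
  "sdt r n lam = {D. length D = Suc n \<and> D ! 0 = delta r \<and> D ! n = lam \<and>
                    (\<forall>k<n. domino_step (D ! k) (D ! Suc k))}"

definition num_vertical :: "cell set list \<Rightarrow> nat" where
  "num_vertical D = card {k. Suc k < length D \<and> vertical_domino (D ! Suc k - D ! k)}"

definition spin :: "cell set list \<Rightarrow> real" where
  "spin D = real (num_vertical D) / 2"

text \<open>d^lambda(q), evaluated at a real q > 0 (q^(1/2) interpreted as positive root).\<close>
definition dpoly :: "nat \<Rightarrow> nat \<Rightarrow> cell set \<Rightarrow> real \<Rightarrow> real" where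
  "dpoly r n lam q = (\<Sum>D\<in>sdt r n lam. q powr spin D)"

end

theory Submission
  imports Defs
begin


lemma partition_delta: "is_partition (delta r)"
proof -
  have "delta r \<subseteq> {..<r} \<times> {..<r}" by (auto simp: delta_def)
  then have "finite (delta r)" by (rule finite_subset) auto
  then show ?thesis unfolding is_partition_def delta_def by auto
qed

lemma partition_Int: "is_partition a \<Longrightarrow> is_partition b \<Longrightarrow> is_partition (a \<inter> b)"
  unfolding is_partition_def by blast

lemma partition_Un: "is_partition a \<Longrightarrow> is_partition b \<Longrightarrow> is_partition (a \<union> b)"
  unfolding is_partition_def by blast

lemma partition_down: "is_partition a \<Longrightarrow> (i, j) \<in> a \<Longrightarrow> i' \<le> i \<Longrightarrow> j' \<le> j \<Longrightarrow> (i', j') \<in> a"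
  unfolding is_partition_def by blast

lemma partition_bound:
  assumes "is_partition a" "(i, j) \<in> a"
  shows "i < card a \<and> j < card a"
proof -
  have fin: "finite a" using assms(1) by (simp add: is_partition_def)
  have "(\<lambda>k. (k, 0::nat)) ` {..i} \<subseteq> a" using partition_down[OF assms] by auto
  then have "card ((\<lambda>k. (k, 0::nat)) ` {..i}) \<le> card a" using fin card_mono by blast
  moreover have "card ((\<lambda>k. (k, 0::nat)) ` {..i}) = Suc i" by (subst card_image) (auto simp: inj_on_def)
  moreover have "(\<lambda>k. (0::nat, k)) ` {..j} \<subseteq> a" using partition_down[OF assms] by auto
  then have "card ((\<lambda>k. (0::nat, k)) ` {..j}) \<le> card a" using fin card_mono by blast
  moreover have "card ((\<lambda>k. (0::nat, k)) ` {..j}) = Suc j" by (subst card_image) (auto simp: inj_on_def)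
  ultimately show ?thesis by simp
qed

lemma partition_subset_box: "is_partition a \<Longrightarrow> a \<subseteq> {..<card a} \<times> {..<card a}"
  using partition_bound by fastforce

lemma finite_partitions_card: "finite {a. is_partition a \<and> card a = N}"
proof -
  have "{a. is_partition a \<and> card a = N} \<subseteq> Pow ({..<N} \<times> {..<N})"
    using partition_subset_box by blast
  then show ?thesis by (rule finite_subset) auto
qed

lemma vert_simp1[simp]: "vertical_domino {(i, j), (Suc i, j)}"
  unfolding vertical_domino_def by blast
lemma horiz_simp1[simp]: "horizontal_domino {(i, j), (i, Suc j)}"
  unfolding horizontal_domino_def by blast
lemma vert_simp2[simp]: "\<not> vertical_domino {(i, j), (i, Suc j)}"
proof
  assume "vertical_domino {(i, j), (i, Suc j)}"
  then obtain a b where e: "{(i, j), (i, Suc j)} = {(a, b), (Suc a, b)}" unfolding vertical_domino_def by blast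
  have "(i, j) \<in> {(a, b), (Suc a, b)}" "(i, Suc j) \<in> {(a, b), (Suc a, b)}"
    by (simp_all only: e[symmetric]) simp_all
  then have "j = b" "Suc j = b" by auto
  then show False by simp
qed
lemma horiz_simp2[simp]: "\<not> horizontal_domino {(i, j), (Suc i, j)}"
proof
  assume "horizontal_domino {(i, j), (Suc i, j)}"
  then obtain a b where e: "{(i, j), (Suc i, j)} = {(a, b), (a, Suc b)}" unfolding horizontal_domino_def by blast
  have "(i, j) \<in> {(a, b), (a, Suc b)}" "(Suc i, j) \<in> {(a, b), (a, Suc b)}"
    by (simp_all only: e[symmetric]) simp_all
  then have "i = a" "Suc i = a" by auto
  then show False by simp
qed

lemma vert_not_horiz: "vertical_domino S \<Longrightarrow> \<not> horizontal_domino S"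
  unfolding vertical_domino_def by (elim exE) simp

lemma domino_card: "is_domino S \<Longrightarrow> card S = 2"
  unfolding is_domino_def vertical_domino_def horizontal_domino_def by auto

lemma step_card:
  assumes "domino_step a b" shows "card b = card a + 2"
proof -
  have "finite b" "a \<subseteq> b" "card (b - a) = 2" using assms domino_card
    by (auto simp: domino_step_def is_partition_def)
  moreover then have "finite a" using finite_subset by blast
  ultimately show ?thesis by (simp add: card_Diff_subset card_mono)
qed




definition Add :: "cell set \<Rightarrow> cell set set" where "Add l = {m. domino_step l m}"
definition Rem :: "cell set \<Rightarrow> cell set set" where "Rem m = {l. domino_step l m}"
definition sw :: "real \<Rightarrow> cell set \<Rightarrow> cell set \<Rightarrow> real" where
  "sw q l m = (if vertical_domino (m - l) then q powr (1/2) else 1)"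

lemma finite_Rem: "finite (Rem m)"
proof (cases "Rem m = {}")
  case False
  then obtain l where "domino_step l m" by (auto simp: Rem_def)
  then have "finite m" by (simp add: domino_step_def is_partition_def)
  moreover have "Rem m \<subseteq> Pow m" by (auto simp: Rem_def domino_step_def)
  ultimately show ?thesis using finite_subset by blast
qed simp

lemma finite_Add: "finite (Add l)"
proof -
  have "Add l \<subseteq> {m. is_partition m \<and> card m = card l + 2}"
    using step_card by (auto simp: Add_def domino_step_def)
  then show ?thesis using finite_partitions_card finite_subset by blast
qed

lemma chain_mono:
  assumes "\<forall>i<k. D ! i \<subseteq> D ! Suc i" "i \<le> j" "j \<le> k"
  shows "D ! i \<subseteq> D ! j"
  using assms(2,3)
proof (induction j)
  case 0 then show ?case by simp
next
  case (Suc j)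
  show ?case
  proof (cases "i = Suc j")
    case False
    then have "D ! i \<subseteq> D ! j" using Suc by simp
    also have "D ! j \<subseteq> D ! Suc j" using assms(1) Suc.prems by simp
    finally show ?thesis .
  qed simp
qed

lemma sdt_subset: "D \<in> sdt r k l \<Longrightarrow> set D \<subseteq> Pow l"
proof -
  assume D: "D \<in> sdt r k l"
  then have len: "length D = Suc k" and last: "D ! k = l" and st: "\<forall>i<k. domino_step (D ! i) (D ! Suc i)"
    by (auto simp: sdt_def)
  have "\<forall>i<k. D ! i \<subseteq> D ! Suc i" using st by (auto simp: domino_step_def)
  then have sub: "\<And>i. i \<le> k \<Longrightarrow> D ! i \<subseteq> l" using chain_mono last by blast
  show ?thesis
  proof
    fix X assume "X \<in> set D"
    then obtain i where "i < length D" "X = D ! i" by (auto simp: in_set_conv_nth)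
    then show "X \<in> Pow l" using sub len by simp
  qed
qed

lemma sdt_finite_shape: "D \<in> sdt r k l \<Longrightarrow> finite l"
proof -
  assume D: "D \<in> sdt r k l"
  show "finite l"
  proof (cases k)
    case 0
    then have "l = delta r" using D by (auto simp: sdt_def)
    then show ?thesis using partition_delta by (simp add: is_partition_def)
  next
    case (Suc k')
    have "\<forall>i<k. domino_step (D ! i) (D ! Suc i)" using D by (simp add: sdt_def)
    then have "domino_step (D ! k') (D ! k)" using Suc by simp
    then show ?thesis using D by (simp add: sdt_def domino_step_def is_partition_def)
  qed
qed

lemma finite_sdt: "finite (sdt r k l)"
proof (cases "sdt r k l = {}")
  case False
  then obtain D where "D \<in> sdt r k l" by blast
  then have fl: "finite l" by (rule sdt_finite_shape)
  have "\<And>D. D \<in> sdt r k l \<Longrightarrow> length D = Suc k" by (simp add: sdt_def)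
  then have "sdt r k l \<subseteq> {xs. set xs \<subseteq> Pow l \<and> length xs = Suc k}"
    using sdt_subset by blast
  moreover have "finite {xs. set xs \<subseteq> Pow l \<and> length xs = Suc k}"
    using fl by (simp add: finite_lists_length_eq)
  ultimately show ?thesis using finite_subset by blast
qed simp

lemma sdt_Suc: "sdt r (Suc k) m = (\<Union>l\<in>Rem m. (\<lambda>D. D @ [m]) ` sdt r k l)"
proof
  show "sdt r (Suc k) m \<subseteq> (\<Union>l\<in>Rem m. (\<lambda>D. D @ [m]) ` sdt r k l)"
  proof
    fix D assume D: "D \<in> sdt r (Suc k) m"
    then have len: "length D = Suc (Suc k)" and d0: "D ! 0 = delta r" and dl: "D ! Suc k = m"
      and st: "\<forall>i<Suc k. domino_step (D ! i) (D ! Suc i)" by (auto simp: sdt_def)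
    define D' where "D' = take (Suc k) D"
    have lenD': "length D' = Suc k" using len by (simp add: D'_def)
    have nth': "\<And>i. i < Suc k \<Longrightarrow> D' ! i = D ! i" by (simp add: D'_def)
    have eq: "D = D' @ [m]"
    proof (rule nth_equalityI)
      show "length D = length (D' @ [m])" using len lenD' by simp
      fix i assume "i < length D"
      then have "i < Suc k \<or> i = Suc k" using len by auto
      then show "D ! i = (D' @ [m]) ! i"
        using nth' lenD' dl by (auto simp: nth_append)
    qed
    have "D' \<in> sdt r k (D ! k)"
      unfolding sdt_def using lenD' nth' d0 st by auto
    moreover have "D ! k \<in> Rem m" using st dl by (auto simp: Rem_def)
    ultimately show "D \<in> (\<Union>l\<in>Rem m. (\<lambda>D. D @ [m]) ` sdt r k l)" using eq by blast
  qed
next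
  show "(\<Union>l\<in>Rem m. (\<lambda>D. D @ [m]) ` sdt r k l) \<subseteq> sdt r (Suc k) m"
  proof clarify
    fix l D assume l: "l \<in> Rem m" and D: "D \<in> sdt r k l"
    then have len: "length D = Suc k" and d0: "D ! 0 = delta r" and dl: "D ! k = l"
      and st: "\<forall>i<k. domino_step (D ! i) (D ! Suc i)" by (auto simp: sdt_def)
    have "\<forall>i<Suc k. domino_step ((D @ [m]) ! i) ((D @ [m]) ! Suc i)"
    proof (intro allI impI)
      fix i assume "i < Suc k"
      then have "i < k \<or> i = k" by auto
      then show "domino_step ((D @ [m]) ! i) ((D @ [m]) ! Suc i)"
      proof
        assume "i < k" then show ?thesis using st len by (simp add: nth_append)
      next
        assume "i = k" then show ?thesis using l dl len by (simp add: nth_append Rem_def)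
      qed
    qed
    then show "D @ [m] \<in> sdt r (Suc k) m"
      unfolding sdt_def using len d0 by (simp add: nth_append)
  qed
qed

lemma sdt_shape: "D \<in> sdt r k l \<Longrightarrow> l = D ! k"
  by (simp add: sdt_def)

lemma nv_snoc:
  assumes D: "D \<in> sdt r k l"
  shows "num_vertical (D @ [m]) = num_vertical D + (if vertical_domino (m - l) then 1 else 0)"
proof -
  have len: "length D = Suc k" and dl: "D ! k = l" using D by (auto simp: sdt_def)
  let ?A = "{i. Suc i < length D \<and> vertical_domino (D ! Suc i - D ! i)}"
  have fin: "finite ?A" by (rule finite_subset[of _ "{..<length D}"]) auto
  have "{i. Suc i < length (D @ [m]) \<and> vertical_domino ((D @ [m]) ! Suc i - (D @ [m]) ! i)}
      = ?A \<union> (if vertical_domino (m - l) then {k} else {})"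
  proof (rule set_eqI)
    fix i
    show "i \<in> {i. Suc i < length (D @ [m]) \<and> vertical_domino ((D @ [m]) ! Suc i - (D @ [m]) ! i)}
      \<longleftrightarrow> i \<in> ?A \<union> (if vertical_domino (m - l) then {k} else {})"
    proof (cases "i < k")
      case True then show ?thesis using len by (auto simp: nth_append)
    next
      case False
      then have "i = k \<or> i > k" by auto
      then show ?thesis using len dl by (auto simp: nth_append)
    qed
  qed
  moreover have "k \<notin> ?A" using len by simp
  ultimately show ?thesis unfolding num_vertical_def using fin by (auto)
qed

lemma dpoly_Suc:
  assumes q: "q > 0"
  shows "dpoly r (Suc k) m q = (\<Sum>l\<in>Rem m. sw q l m * dpoly r k l q)"
proof -
  have "dpoly r (Suc k) m q = (\<Sum>D\<in>(\<Union>l\<in>Rem m. (\<lambda>D. D @ [m]) ` sdt r k l). q powr spin D)"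
    unfolding dpoly_def sdt_Suc ..
  also have "\<dots> = (\<Sum>l\<in>Rem m. \<Sum>D\<in>(\<lambda>D. D @ [m]) ` sdt r k l. q powr spin D)"
    by (rule sum.UNION_disjoint) (auto simp: finite_Rem finite_sdt dest: sdt_shape)
  also have "\<dots> = (\<Sum>l\<in>Rem m. \<Sum>D\<in>sdt r k l. q powr spin (D @ [m]))"
    by (rule sum.cong[OF refl], subst sum.reindex) (auto simp: inj_on_def)
  also have "\<dots> = (\<Sum>l\<in>Rem m. \<Sum>D\<in>sdt r k l. sw q l m * q powr spin D)"
  proof (rule sum.cong[OF refl], rule sum.cong[OF refl])
    fix l D assume "D \<in> sdt r k l"
    then have "num_vertical (D @ [m]) = num_vertical D + (if vertical_domino (m - l) then 1 else 0)"
      by (rule nv_snoc)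
    then show "q powr spin (D @ [m]) = sw q l m * q powr spin D"
      unfolding spin_def sw_def by (auto simp: powr_add add_divide_distrib)
  qed
  also have "\<dots> = (\<Sum>l\<in>Rem m. sw q l m * dpoly r k l q)"
    by (simp add: dpoly_def sum_distrib_left)
  finally show ?thesis .
qed

lemma dpoly_0: assumes "q > 0" shows "dpoly r 0 l q = (if l = delta r then 1 else 0)"
proof -
  have "sdt r 0 l = (if l = delta r then {[delta r]} else {})"
    by (auto simp: sdt_def length_Suc_conv)
  then show ?thesis using assms by (simp add: dpoly_def spin_def num_vertical_def)
qed

lemma sdt_P: "D \<in> sdt r k l \<Longrightarrow> l \<in> P r k"
proof -
  assume D: "D \<in> sdt r k l"
  then have d0: "D ! 0 = delta r" and dl: "D ! k = l"
      and st: "\<forall>i<k. domino_step (D ! i) (D ! Suc i)" by (auto simp: sdt_def)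
  have "\<And>i. i \<le> k \<Longrightarrow> is_partition (D ! i) \<and> domino_step\<^sup>*\<^sup>* (delta r) (D ! i) \<and> card (D ! i) = card (delta r) + 2 * i"
  proof -
    fix i assume "i \<le> k"
    then show "is_partition (D ! i) \<and> domino_step\<^sup>*\<^sup>* (delta r) (D ! i) \<and> card (D ! i) = card (delta r) + 2 * i"
    proof (induction i)
      case 0 then show ?case using d0 partition_delta by simp
    next
      case (Suc i)
      then have s: "domino_step (D ! i) (D ! Suc i)" using st by simp
      then show ?case using Suc step_card[OF s]
        by (auto simp: domino_step_def intro: rtranclp.rtrancl_into_rtrancl[where b = "D ! i"])
    qed
  qed
  from this[of k] show "l \<in> P r k" using dl by (simp add: P_def has_2core_def)
qed

lemma dpoly_outside: "l \<notin> P r k \<Longrightarrow> dpoly r k l q = 0"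
  unfolding dpoly_def using sdt_P by (metis sum.neutral)

lemma finite_P: "finite (P r n)"
proof -
  have "P r n \<subseteq> {a. is_partition a \<and> card a = card (delta r) + 2 * n}" by (auto simp: P_def)
  then show ?thesis using finite_partitions_card finite_subset by blast
qed

lemma Add_P: "l \<in> P r n \<Longrightarrow> Add l \<subseteq> P r (Suc n)"
  unfolding Add_def P_def has_2core_def
  using step_card by (auto simp: domino_step_def intro: rtranclp.rtrancl_into_rtrancl)




definition rl :: "cell set \<Rightarrow> nat \<Rightarrow> nat" where "rl a i = card {j. (i, j) \<in> a}"

lemma downclosed_nat:
  assumes "finite (S::nat set)" "\<And>j j'. j \<in> S \<Longrightarrow> j' \<le> j \<Longrightarrow> j' \<in> S"
  shows "S = {..<card S}"
proof (cases "S = {}")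
  case False
  let ?M = "Max S"
  have "S = {..?M}"
  proof
    show "S \<subseteq> {..?M}" using assms(1) by auto
    show "{..?M} \<subseteq> S"
    proof
      fix x assume "x \<in> {..?M}"
      moreover have "?M \<in> S" using assms(1) False by (rule Max_in)
      ultimately show "x \<in> S" using assms(2) by simp
    qed
  qed
  then show ?thesis by (metis card_atMost lessThan_Suc_atMost)
qed simp

lemma rl_mem: assumes "is_partition a" shows "(i, j) \<in> a \<longleftrightarrow> j < rl a i"
proof -
  let ?S = "{j. (i, j) \<in> a}"
  have "?S \<subseteq> snd ` a" by force
  then have "finite ?S" using assms finite_subset by (auto simp: is_partition_def)
  moreover have "\<And>j j'. j \<in> ?S \<Longrightarrow> j' \<le> j \<Longrightarrow> j' \<in> ?S" using partition_down[OF assms] by auto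
  ultimately have "?S = {..<card ?S}" by (rule downclosed_nat)
  then show ?thesis unfolding rl_def by (metis lessThan_iff mem_Collect_eq)
qed

lemma rl_anti: assumes "is_partition a" "i \<le> i'" shows "rl a i' \<le> rl a i"
proof (rule ccontr)
  assume "\<not> rl a i' \<le> rl a i"
  then have "(i', rl a i) \<in> a" using rl_mem[OF assms(1)] by simp
  then have "(i, rl a i) \<in> a" using partition_down[OF assms(1)] assms(2) by blast
  then show False using rl_mem[OF assms(1)] by simp
qed

lemma rl_zero: assumes "is_partition a" "card a \<le> i" shows "rl a i = 0"
proof (rule ccontr)
  assume "rl a i \<noteq> 0"
  then have "(i, 0) \<in> a" using rl_mem[OF assms(1)] by simp
  then show False using partition_bound[OF assms(1)] assms(2) by fastforce
qed

definition AddH where "AddH a = {m. domino_step a m \<and> horizontal_domino (m - a)}"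
definition RemH where "RemH a = {l. domino_step l a \<and> horizontal_domino (a - l)}"
definition AddV where "AddV a = {m. domino_step a m \<and> vertical_domino (m - a)}"
definition RemV where "RemV a = {l. domino_step l a \<and> vertical_domino (a - l)}"

lemma AddH_eq:
  assumes pa: "is_partition a"
  shows "AddH a = (\<lambda>i. a \<union> {(i, rl a i), (i, Suc (rl a i))}) ` {i. i = 0 \<or> rl a i + 2 \<le> rl a (i - 1)}"
proof
  show "AddH a \<subseteq> (\<lambda>i. a \<union> {(i, rl a i), (i, Suc (rl a i))}) ` {i. i = 0 \<or> rl a i + 2 \<le> rl a (i - 1)}"
  proof
    fix m assume "m \<in> AddH a"
    then have st: "domino_step a m" and h: "horizontal_domino (m - a)" by (auto simp: AddH_def)
    then obtain i j where d: "m - a = {(i, j), (i, Suc j)}" by (auto simp: horizontal_domino_def)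
    have pm: "is_partition m" and sub: "a \<subseteq> m" using st by (auto simp: domino_step_def)
    have meq: "m = a \<union> {(i, j), (i, Suc j)}" using d sub by blast
    have nij: "(i, j) \<notin> a" using d by blast
    then have j1: "rl a i \<le> j" using rl_mem[OF pa] by simp
    have j2: "j = rl a i"
    proof (rule ccontr)
      assume "j \<noteq> rl a i"
      then have "rl a i < j" using j1 by simp
      moreover have "(i, j) \<in> m" using meq by blast
      ultimately have "(i, rl a i) \<in> m" using partition_down[OF pm] by (meson less_imp_le order_refl)
      moreover have "(i, rl a i) \<notin> a" using rl_mem[OF pa] by simp
      ultimately show False using meq \<open>rl a i < j\<close> by auto
    qed
    have "i = 0 \<or> rl a i + 2 \<le> rl a (i - 1)"
    proof (cases i)
      case (Suc i0)
      have "(i, Suc j) \<in> m" using meq by blast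
      then have "(i0, Suc j) \<in> m" using partition_down[OF pm] Suc by (meson le_Suc_eq order_refl)
      then have "(i0, Suc j) \<in> a" using meq Suc by auto
      then show ?thesis using rl_mem[OF pa] Suc j2 by simp
    qed simp
    then show "m \<in> (\<lambda>i. a \<union> {(i, rl a i), (i, Suc (rl a i))}) ` {i. i = 0 \<or> rl a i + 2 \<le> rl a (i - 1)}"
      using meq j2 by blast
  qed
next
  show "(\<lambda>i. a \<union> {(i, rl a i), (i, Suc (rl a i))}) ` {i. i = 0 \<or> rl a i + 2 \<le> rl a (i - 1)} \<subseteq> AddH a"
  proof clarify
    fix i assume ci: "i = 0 \<or> rl a i + 2 \<le> rl a (i - 1)"
    let ?d = "{(i, rl a i), (i, Suc (rl a i))}"
    let ?m = "a \<union> ?d"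
    have dis: "a - ?d = a" "?m - a = ?d" using rl_mem[OF pa] by auto
    have "is_partition ?m"
      unfolding is_partition_def
    proof (intro conjI allI impI)
      show "finite ?m" using pa by (simp add: is_partition_def)
    next
      fix x y x' y' assume xy: "(x, y) \<in> ?m" and le: "x' \<le> x" "y' \<le> y"
      show "(x', y') \<in> ?m"
      proof (cases "(x, y) \<in> a")
        case True then show ?thesis using partition_down[OF pa] le by blast
      next
        case False
        then have xi: "x = i" and yle: "y \<le> Suc (rl a i)" using xy by auto
        show ?thesis
        proof (cases "x' = i")
          case True
          then show ?thesis using rl_mem[OF pa, of i y'] le yle xi by (cases "y' < rl a i") auto
        next
          case False
          then have "x' < i" using le xi by simp
          then have "i \<noteq> 0" by simp
          then have "rl a i + 2 \<le> rl a (i - 1)" using ci by simp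
          moreover have "rl a (i - 1) \<le> rl a x'" using rl_anti[OF pa] \<open>x' < i\<close> by simp
          ultimately have "y' < rl a x'" using le yle by simp
          then show ?thesis using rl_mem[OF pa] by simp
        qed
      qed
    qed
    then show "?m \<in> AddH a"
      unfolding AddH_def domino_step_def is_domino_def using pa dis by auto
  qed
qed

lemma RemH_eq:
  assumes pa: "is_partition a"
  shows "RemH a = (\<lambda>i. a - {(i, rl a i - 2), (i, rl a i - 1)}) ` {i. rl a (Suc i) + 2 \<le> rl a i}"
proof
  show "RemH a \<subseteq> (\<lambda>i. a - {(i, rl a i - 2), (i, rl a i - 1)}) ` {i. rl a (Suc i) + 2 \<le> rl a i}"
  proof
    fix l assume "l \<in> RemH a"
    then have st: "domino_step l a" and h: "horizontal_domino (a - l)" by (auto simp: RemH_def)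
    then obtain i j where d: "a - l = {(i, j), (i, Suc j)}" by (auto simp: horizontal_domino_def)
    have pl: "is_partition l" and sub: "l \<subseteq> a" using st by (auto simp: domino_step_def)
    have leq: "l = a - {(i, j), (i, Suc j)}" using d sub by blast
    have "(i, Suc j) \<in> a" using d by blast
    then have j1: "Suc j < rl a i" using rl_mem[OF pa] by simp
    have j2: "rl a i = Suc (Suc j)"
    proof (rule ccontr)
      assume "rl a i \<noteq> Suc (Suc j)"
      then have "(i, Suc (Suc j)) \<in> a" using j1 rl_mem[OF pa] by simp
      then have "(i, Suc (Suc j)) \<in> l" using leq by simp
      then have "(i, Suc j) \<in> l" using partition_down[OF pl] by (meson le_Suc_eq order_refl)
      then show False using leq by simp
    qed
    have "rl a (Suc i) \<le> j"
    proof (rule ccontr)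
      assume "\<not> rl a (Suc i) \<le> j"
      then have "(Suc i, j) \<in> a" using rl_mem[OF pa] by simp
      then have "(Suc i, j) \<in> l" using leq by simp
      then have "(i, j) \<in> l" using partition_down[OF pl] by (meson le_Suc_eq order_refl)
      then show False using leq by simp
    qed
    then show "l \<in> (\<lambda>i. a - {(i, rl a i - 2), (i, rl a i - 1)}) ` {i. rl a (Suc i) + 2 \<le> rl a i}"
      using leq j2 by (intro image_eqI[where x = i]) auto
  qed
next
  show "(\<lambda>i. a - {(i, rl a i - 2), (i, rl a i - 1)}) ` {i. rl a (Suc i) + 2 \<le> rl a i} \<subseteq> RemH a"
  proof clarify
    fix i assume ci: "rl a (Suc i) + 2 \<le> rl a i"
    define j where "j = rl a i - 2"
    have jj: "rl a i - 1 = Suc j" "rl a i = Suc (Suc j)" using ci by (auto simp: j_def)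
    let ?d = "{(i, j), (i, Suc j)}"
    let ?l = "a - ?d"
    have dsub: "?d \<subseteq> a" using rl_mem[OF pa] jj by auto
    have "is_partition ?l"
      unfolding is_partition_def
    proof (intro conjI allI impI)
      show "finite ?l" using pa by (simp add: is_partition_def)
    next
      fix x y x' y' assume xy: "(x, y) \<in> ?l" and le: "x' \<le> x" "y' \<le> y"
      have "(x', y') \<in> a" using partition_down[OF pa] xy le by blast
      moreover have "(x', y') \<notin> ?d"
      proof
        assume "(x', y') \<in> ?d"
        then have x'i: "x' = i" and "j \<le> y'" by auto
        have ya: "y < rl a x" using xy rl_mem[OF pa] by simp
        show False
        proof (cases "x = i")
          case True
          then show False using xy ya jj \<open>j \<le> y'\<close> le by auto
        next
          case False
          then have "Suc i \<le> x" using le x'i by simp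
          then have "rl a x \<le> rl a (Suc i)" using rl_anti[OF pa] by simp
          then show False using ya ci jj \<open>j \<le> y'\<close> le by simp
        qed
      qed
      ultimately show "(x', y') \<in> ?l" by simp
    qed
    moreover have "a - ?l = ?d" using dsub by blast
    ultimately have "?l \<in> RemH a"
      unfolding RemH_def domino_step_def is_domino_def using pa by auto
    then show "a - {(i, rl a i - 2), (i, rl a i - 1)} \<in> RemH a" using jj by simp
  qed
qed

lemma card_AddH_RemH:
  assumes pa: "is_partition a"
  shows "card (AddH a) = Suc (card (RemH a))"
proof -
  let ?I = "{i. rl a (Suc i) + 2 \<le> rl a i}"
  have finI: "finite ?I"
  proof (rule finite_subset[of _ "{..<card a}"])
    show "?I \<subseteq> {..<card a}"
    proof
      fix i assume "i \<in> ?I"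
      then have "rl a i \<noteq> 0" by simp
      then show "i \<in> {..<card a}" using rl_zero[OF pa] by (meson lessThan_iff not_le)
    qed
  qed simp
  have inj1: "inj_on (\<lambda>i. a \<union> {(i, rl a i), (i, Suc (rl a i))}) X" for X
  proof (rule inj_onI)
    fix i i' assume "a \<union> {(i, rl a i), (i, Suc (rl a i))} = a \<union> {(i', rl a i'), (i', Suc (rl a i'))}"
    moreover have "(i, rl a i) \<notin> a" using rl_mem[OF pa] by simp
    ultimately have "(i, rl a i) \<in> {(i', rl a i'), (i', Suc (rl a i'))}" by blast
    then show "i = i'" by auto
  qed
  have inj2: "inj_on (\<lambda>i. a - {(i, rl a i - 2), (i, rl a i - 1)}) ?I"
  proof (rule inj_onI)
    fix i i' assume ii: "i \<in> ?I" "i' \<in> ?I" and eq: "a - {(i, rl a i - 2), (i, rl a i - 1)} = a - {(i', rl a i' - 2), (i', rl a i' - 1)}"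
    have "(i, rl a i - 1) \<in> a" using ii rl_mem[OF pa] by simp
    moreover have "(i, rl a i - 1) \<notin> a - {(i, rl a i - 2), (i, rl a i - 1)}" by simp
    ultimately have "(i, rl a i - 1) \<in> {(i', rl a i' - 2), (i', rl a i' - 1)}" using eq by blast
    then show "i = i'" by auto
  qed
  have eqI: "{i. i = 0 \<or> rl a i + 2 \<le> rl a (i - 1)} = insert 0 (Suc ` ?I)"
  proof (rule set_eqI)
    fix i show "i \<in> {i. i = 0 \<or> rl a i + 2 \<le> rl a (i - 1)} \<longleftrightarrow> i \<in> insert 0 (Suc ` ?I)"
      by (cases i) auto
  qed
  have "card (AddH a) = card {i. i = 0 \<or> rl a i + 2 \<le> rl a (i - 1)}"
    unfolding AddH_eq[OF pa] by (rule card_image[OF inj1])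
  also have "\<dots> = card (insert 0 (Suc ` ?I))" using eqI by simp
  also have "\<dots> = Suc (card ?I)" using finI by (simp add: card_image)
  also have "card ?I = card (RemH a)" unfolding RemH_eq[OF pa] by (rule card_image[OF inj2, symmetric])
  finally show ?thesis .
qed




definition tr :: "cell set \<Rightarrow> cell set" where "tr a = prod.swap ` a"

lemma tr_tr[simp]: "tr (tr a) = a"
  unfolding tr_def by (simp add: image_image)

lemma tr_mem[simp]: "(i, j) \<in> tr a \<longleftrightarrow> (j, i) \<in> a"
  unfolding tr_def by (rule pair_in_swap_image)

lemma inj_tr: "inj tr"
proof (rule injI)
  fix a b assume "tr a = tr b"
  then have "tr (tr a) = tr (tr b)" by simp
  then show "a = b" by simp
qed

lemma tr_diff: "tr (a - b) = tr a - tr b"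
  unfolding tr_def by (simp add: image_set_diff)

lemma tr_mono: "a \<subseteq> b \<Longrightarrow> tr a \<subseteq> tr b"
  unfolding tr_def by (rule image_mono)

lemma tr_subset: "tr a \<subseteq> tr b \<longleftrightarrow> a \<subseteq> b"
  using tr_mono[of "tr a" "tr b"] tr_mono[of a b] by auto

lemma tr_partition: "is_partition (tr a) \<longleftrightarrow> is_partition a"
proof -
  have "is_partition a \<Longrightarrow> is_partition (tr a)" for a
  proof -
    assume pa: "is_partition a"
    have "finite (tr a)" using pa by (simp add: tr_def is_partition_def)
    moreover have "\<forall>i j i' j'. (i, j) \<in> tr a \<longrightarrow> i' \<le> i \<longrightarrow> j' \<le> j \<longrightarrow> (i', j') \<in> tr a"
      using partition_down[OF pa] by simp
    ultimately show ?thesis by (simp add: is_partition_def)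
  qed
  from this[of a] this[of "tr a"] show ?thesis by auto
qed

lemma tr_insert: "tr (insert x S) = insert (prod.swap x) (tr S)"
  unfolding tr_def by simp

lemma tr_vert: "vertical_domino (tr S) \<longleftrightarrow> horizontal_domino S"
proof
  assume "vertical_domino (tr S)"
  then obtain i j where "tr S = {(i, j), (Suc i, j)}" by (auto simp: vertical_domino_def)
  then have "S = tr {(i, j), (Suc i, j)}" by (metis tr_tr)
  then have "S = {(j, i), (j, Suc i)}" by (simp add: tr_insert tr_def)
  then show "horizontal_domino S" by simp
next
  assume "horizontal_domino S"
  then obtain i j where "S = {(i, j), (i, Suc j)}" by (auto simp: horizontal_domino_def)
  then have "tr S = {(j, i), (Suc j, i)}" by (simp add: tr_insert tr_def)
  then show "vertical_domino (tr S)" by simp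
qed

lemma tr_horiz: "horizontal_domino (tr S) \<longleftrightarrow> vertical_domino S"
  using tr_vert[of "tr S"] by simp

lemma tr_step: "domino_step (tr a) (tr b) \<longleftrightarrow> domino_step a b"
  unfolding domino_step_def is_domino_def tr_partition tr_subset tr_diff[symmetric] tr_vert tr_horiz
  by blast

lemma AddV_tr: "AddV a = tr ` AddH (tr a)"
proof
  show "AddV a \<subseteq> tr ` AddH (tr a)"
  proof
    fix m assume "m \<in> AddV a"
    then have "tr m \<in> AddH (tr a)"
      unfolding AddV_def AddH_def by (simp add: tr_step tr_diff[symmetric] tr_horiz)
    then show "m \<in> tr ` AddH (tr a)" by (metis image_eqI tr_tr)
  qed
next
  show "tr ` AddH (tr a) \<subseteq> AddV a"
  proof
    fix m assume "m \<in> tr ` AddH (tr a)"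
    then obtain m' where m': "m' \<in> AddH (tr a)" "m = tr m'" by blast
    then show "m \<in> AddV a"
      unfolding AddV_def AddH_def using tr_step[of "tr a" m'] tr_vert[of "m' - tr a"]
      by (simp add: tr_diff)
  qed
qed

lemma RemV_tr: "RemV a = tr ` RemH (tr a)"
proof
  show "RemV a \<subseteq> tr ` RemH (tr a)"
  proof
    fix m assume "m \<in> RemV a"
    then have "tr m \<in> RemH (tr a)"
      unfolding RemV_def RemH_def by (simp add: tr_step tr_diff[symmetric] tr_horiz)
    then show "m \<in> tr ` RemH (tr a)" by (metis image_eqI tr_tr)
  qed
next
  show "tr ` RemH (tr a) \<subseteq> RemV a"
  proof
    fix m assume "m \<in> tr ` RemH (tr a)"
    then obtain m' where m': "m' \<in> RemH (tr a)" "m = tr m'" by blast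
    then show "m \<in> RemV a"
      unfolding RemV_def RemH_def using tr_step[of m' "tr a"] tr_vert[of "tr a - m'"]
      by (simp add: tr_diff)
  qed
qed

lemma card_AddV_RemV:
  assumes pa: "is_partition a"
  shows "card (AddV a) = Suc (card (RemV a))"
proof -
  have "card (AddV a) = card (AddH (tr a))" unfolding AddV_tr
    by (rule card_image) (meson inj_tr inj_on_subset subset_UNIV)
  also have "\<dots> = Suc (card (RemH (tr a)))" using pa by (simp add: card_AddH_RemH tr_partition)
  also have "card (RemH (tr a)) = card (RemV a)" unfolding RemV_tr
    by (rule card_image[symmetric]) (meson inj_tr inj_on_subset subset_UNIV)
  finally show ?thesis .
qed

lemma sw_sq: "q > 0 \<Longrightarrow> (sw q l m)\<^sup>2 = (if vertical_domino (m - l) then q else 1)"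
  unfolding sw_def by (simp add: powr_half_sqrt)

lemma diag:
  assumes pa: "is_partition a" and q: "q > 0"
  shows "(\<Sum>m\<in>Add a. (sw q a m)\<^sup>2) = (\<Sum>l\<in>Rem a. (sw q l a)\<^sup>2) + 1 + q"
proof -
  have dom1: "\<And>m. m \<in> Add a \<Longrightarrow> vertical_domino (m - a) \<or> horizontal_domino (m - a)"
    by (auto simp: Add_def domino_step_def is_domino_def)
  have dom2: "\<And>l. l \<in> Rem a \<Longrightarrow> vertical_domino (a - l) \<or> horizontal_domino (a - l)"
    by (auto simp: Rem_def domino_step_def is_domino_def)
  have A: "Add a = AddV a \<union> AddH a" "AddV a \<inter> AddH a = {}"
    using dom1 vert_not_horiz by (auto simp: Add_def AddV_def AddH_def)
  have R: "Rem a = RemV a \<union> RemH a" "RemV a \<inter> RemH a = {}"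
    using dom2 vert_not_horiz by (auto simp: Rem_def RemV_def RemH_def)
  have fA: "finite (AddV a)" "finite (AddH a)" using finite_Add A(1) by (metis finite_Un)+
  have fR: "finite (RemV a)" "finite (RemH a)" using finite_Rem R(1) by (metis finite_Un)+
  have "(\<Sum>m\<in>Add a. (sw q a m)\<^sup>2) = (\<Sum>m\<in>AddV a. (sw q a m)\<^sup>2) + (\<Sum>m\<in>AddH a. (sw q a m)\<^sup>2)"
    unfolding A(1) by (rule sum.union_disjoint[OF fA A(2)])
  also have "(\<Sum>m\<in>AddV a. (sw q a m)\<^sup>2) = (\<Sum>m\<in>AddV a. q)"
    by (rule sum.cong) (auto simp: sw_sq[OF q] AddV_def)
  also have "(\<Sum>m\<in>AddH a. (sw q a m)\<^sup>2) = (\<Sum>m\<in>AddH a. 1)"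
    by (rule sum.cong) (auto simp: sw_sq[OF q] AddH_def dest: vert_not_horiz)
  also have "(\<Sum>m\<in>AddV a. q) + (\<Sum>m\<in>AddH a. 1) = card (AddV a) * q + card (AddH a)"
    by simp
  finally have 1: "(\<Sum>m\<in>Add a. (sw q a m)\<^sup>2) = card (AddV a) * q + card (AddH a)" .
  have "(\<Sum>l\<in>Rem a. (sw q l a)\<^sup>2) = (\<Sum>l\<in>RemV a. (sw q l a)\<^sup>2) + (\<Sum>l\<in>RemH a. (sw q l a)\<^sup>2)"
    unfolding R(1) by (rule sum.union_disjoint[OF fR R(2)])
  also have "(\<Sum>l\<in>RemV a. (sw q l a)\<^sup>2) = (\<Sum>l\<in>RemV a. q)"
    by (rule sum.cong) (auto simp: sw_sq[OF q] RemV_def)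
  also have "(\<Sum>l\<in>RemH a. (sw q l a)\<^sup>2) = (\<Sum>l\<in>RemH a. 1)"
    by (rule sum.cong) (auto simp: sw_sq[OF q] RemH_def dest: vert_not_horiz)
  also have "(\<Sum>l\<in>RemV a. q) + (\<Sum>l\<in>RemH a. 1) = card (RemV a) * q + card (RemH a)"
    by simp
  finally have 2: "(\<Sum>l\<in>Rem a. (sw q l a)\<^sup>2) = card (RemV a) * q + card (RemH a)" .
  show ?thesis unfolding 1 2 using card_AddV_RemV[OF pa] card_AddH_RemH[OF pa]
    by (simp add: algebra_simps)
qed




definition sh :: "cell \<Rightarrow> cell" where "sh c = (Suc (fst c), Suc (snd c))"
definition fD :: "cell set \<Rightarrow> cell set \<Rightarrow> cell set \<Rightarrow> cell set" where
  "fD l p m = (l \<inter> p) - {c. sh c \<in> m - (l \<union> p)}"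
definition gU :: "cell set \<Rightarrow> cell set \<Rightarrow> cell set \<Rightarrow> cell set" where
  "gU l p n = (l \<union> p) \<union> sh ` ((l \<inter> p) - n)"

lemma sh_pre: "{c. sh c \<in> {(Suc i, Suc j)}} = {(i, j)}"
  by (auto simp: sh_def prod_eq_iff)

lemma sh_img: "sh ` {(i, j)} = {(Suc i, Suc j)}"
  by (simp add: sh_def)

lemma down1: "is_partition a \<Longrightarrow> (Suc i, j) \<in> a \<Longrightarrow> (i, j) \<in> a"
  using partition_down[of a "Suc i" j i j] by simp
lemma down2: "is_partition a \<Longrightarrow> (i, Suc j) \<in> a \<Longrightarrow> (i, j) \<in> a"
  using partition_down[of a i "Suc j" i j] by simp

lemma fD_sym: "fD l p m = fD p l m"
  unfolding fD_def by (simp add: Int_commute Un_commute)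
lemma gU_sym: "gU l p n = gU p l n"
  unfolding gU_def by (simp add: Int_commute Un_commute)

lemma L1_VH:
  assumes st1: "domino_step l m" and st2: "domino_step p m"
    and v: "vertical_domino (m - l)" and h: "horizontal_domino (m - p)"
    and ov: "(m - l) \<inter> (m - p) \<noteq> {}"
  shows "domino_step (fD l p m) l \<and> domino_step (fD l p m) p \<and> gU l p (fD l p m) = m \<and>
         sw q (fD l p m) l * sw q (fD l p m) p = sw q l m * sw q p m"
proof -
  obtain a b where d1: "m - l = {(a, b), (Suc a, b)}" using v by (auto simp: vertical_domino_def)
  obtain c e where d2: "m - p = {(c, e), (c, Suc e)}" using h by (auto simp: horizontal_domino_def)
  have pm: "is_partition m" and pl: "is_partition l" and pp: "is_partition p"
    and sl: "l \<subseteq> m" and sp: "p \<subseteq> m" using st1 st2 by (auto simp: domino_step_def)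
  have leq: "l = m - {(a, b), (Suc a, b)}" using d1 sl by blast
  have peq: "p = m - {(c, e), (c, Suc e)}" using d2 sp by blast
  have mem: "(a, b) \<in> m" "(Suc a, b) \<in> m" "(c, e) \<in> m" "(c, Suc e) \<in> m" using d1 d2 by blast+
  have "(a, b) = (c, e) \<or> (a, b) = (c, Suc e) \<or> (Suc a, b) = (c, e) \<or> (Suc a, b) = (c, Suc e)"
    using ov d1 d2 by auto
  then have ce: "c = Suc a \<and> b = Suc e"
  proof (elim disjE)
    assume eq: "(a, b) = (c, e)"
    then have "(Suc a, b) \<in> p" using peq mem by auto
    then have "(a, b) \<in> p" by (rule down1[OF pp])
    then show ?thesis using peq eq by auto
  next
    assume eq: "(a, b) = (c, Suc e)"
    then have "(Suc a, b) \<in> p" using peq mem by auto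
    then have "(a, b) \<in> p" by (rule down1[OF pp])
    then show ?thesis using peq eq by auto
  next
    assume eq: "(Suc a, b) = (c, e)"
    then have "(Suc a, Suc b) \<in> l" using leq mem by auto
    then have "(Suc a, b) \<in> l" by (rule down2[OF pl])
    then show ?thesis using leq by auto
  next
    assume "(Suc a, b) = (c, Suc e)"
    then show ?thesis by simp
  qed
  define i j where "i = a" and "j = e"
  have d1': "m - l = {(i, Suc j), (Suc i, Suc j)}" using d1 ce by (simp add: i_def j_def)
  have d2': "m - p = {(Suc i, j), (Suc i, Suc j)}" using d2 ce by (simp add: i_def j_def)
  have leq': "l = m - {(i, Suc j), (Suc i, Suc j)}" using d1' sl by blast
  have peq': "p = m - {(Suc i, j), (Suc i, Suc j)}" using d2' sp by blast
  have m1: "(i, Suc j) \<in> m" "(Suc i, Suc j) \<in> m" "(Suc i, j) \<in> m" using d1' d2' by blast+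
  have m0: "(i, j) \<in> m" using down2[OF pm m1(1)] .
  let ?B = "{(i, j), (i, Suc j), (Suc i, j), (Suc i, Suc j)}"
  have un: "m - (l \<union> p) = {(Suc i, Suc j)}" using leq' peq' m1 by auto
  have fe: "fD l p m = m - ?B"
    unfolding fD_def un sh_pre using leq' peq' by auto
  have pn: "is_partition (m - ?B)"
    unfolding is_partition_def
  proof (intro conjI allI impI)
    show "finite (m - ?B)" using pm by (simp add: is_partition_def)
  next
    fix x y x' y' assume xy: "(x, y) \<in> m - ?B" and le: "x' \<le> x" "y' \<le> y"
    have "(x', y') \<in> m" using partition_down[OF pm] xy le by blast
    moreover have "(x', y') \<notin> ?B"
    proof
      assume "(x', y') \<in> ?B"
      then have ge: "i \<le> x" "j \<le> y" using le by auto
      have "(x, y) \<noteq> (i, j)" using xy by auto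
      then have "Suc j \<le> y \<or> Suc i \<le> x" using ge by auto
      then show False
      proof
        assume "Suc j \<le> y"
        have "(x, y) \<notin> l"
        proof
          assume "(x, y) \<in> l"
          then have "(i, Suc j) \<in> l" using partition_down[OF pl] ge \<open>Suc j \<le> y\<close> by blast
          then show False using leq' by simp
        qed
        then show False using xy leq' by auto
      next
        assume "Suc i \<le> x"
        have "(x, y) \<notin> p"
        proof
          assume "(x, y) \<in> p"
          then have "(Suc i, j) \<in> p" using partition_down[OF pp] ge \<open>Suc i \<le> x\<close> by blast
          then show False using peq' by simp
        qed
        then show False using xy peq' by auto
      qed
    qed
    ultimately show "(x', y') \<in> m - ?B" by simp
  qed
  have e1: "l - (m - ?B) = {(i, j), (Suc i, j)}" using leq' m0 m1 by auto
  have e2: "p - (m - ?B) = {(i, j), (i, Suc j)}" using peq' m0 m1 by auto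
  have s1: "domino_step (m - ?B) l"
    unfolding domino_step_def is_domino_def e1 using pn pl leq' by auto
  have s2: "domino_step (m - ?B) p"
    unfolding domino_step_def is_domino_def e2 using pn pp peq' by auto
  have g: "gU l p (m - ?B) = m"
  proof -
    have "(l \<inter> p) - (m - ?B) = {(i, j)}" using leq' peq' m0 by auto
    then have "gU l p (m - ?B) = (l \<union> p) \<union> {(Suc i, Suc j)}" unfolding gU_def by (simp add: sh_def)
    also have "\<dots> = m" using leq' peq' m1 by auto
    finally show ?thesis .
  qed
  have w: "sw q (m - ?B) l * sw q (m - ?B) p = sw q l m * sw q p m"
    unfolding sw_def e1 e2 d1' d2' by simp
  show ?thesis unfolding fe using s1 s2 g w by simp
qed

lemma L1_VV:
  assumes st1: "domino_step l m" and st2: "domino_step p m"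
    and v: "vertical_domino (m - l)" and h: "vertical_domino (m - p)"
    and ov: "(m - l) \<inter> (m - p) \<noteq> {}" and ne: "l \<noteq> p"
  shows False
proof -
  obtain a b where d1: "m - l = {(a, b), (Suc a, b)}" using v by (auto simp: vertical_domino_def)
  obtain c e where d2: "m - p = {(c, e), (Suc c, e)}" using h by (auto simp: vertical_domino_def)
  have pm: "is_partition m" and pl: "is_partition l" and pp: "is_partition p"
    and sl: "l \<subseteq> m" and sp: "p \<subseteq> m" using st1 st2 by (auto simp: domino_step_def)
  have leq: "l = m - {(a, b), (Suc a, b)}" using d1 sl by blast
  have peq: "p = m - {(c, e), (Suc c, e)}" using d2 sp by blast
  have mem: "(a, b) \<in> m" "(Suc a, b) \<in> m" "(c, e) \<in> m" "(Suc c, e) \<in> m" using d1 d2 by blast+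
  have "(a, b) \<noteq> (c, e)" using ne leq peq by auto
  then have "(a, b) = (Suc c, e) \<or> (Suc a, b) = (c, e)"
    using ov d1 d2 by auto
  then show False
  proof
    assume eq: "(a, b) = (Suc c, e)"
    then have "(Suc a, b) \<in> p" using peq mem by auto
    then have "(a, b) \<in> p" by (rule down1[OF pp])
    then show False using peq eq by auto
  next
    assume eq: "(Suc a, b) = (c, e)"
    then have "(Suc c, e) \<in> l" using leq mem by auto
    then have "(c, e) \<in> l" by (rule down1[OF pl])
    then show False using leq eq by auto
  qed
qed

lemma L1_HH:
  assumes st1: "domino_step l m" and st2: "domino_step p m"
    and v: "horizontal_domino (m - l)" and h: "horizontal_domino (m - p)"
    and ov: "(m - l) \<inter> (m - p) \<noteq> {}" and ne: "l \<noteq> p"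
  shows False
proof -
  have "domino_step (tr l) (tr m)" "domino_step (tr p) (tr m)" using st1 st2 by (simp_all add: tr_step)
  moreover have "vertical_domino (tr m - tr l)" "vertical_domino (tr m - tr p)"
    using v h by (simp_all add: tr_diff[symmetric] tr_vert)
  moreover have "(tr m - tr l) \<inter> (tr m - tr p) \<noteq> {}"
  proof -
    obtain x where "x \<in> (m - l) \<inter> (m - p)" using ov by blast
    then have "prod.swap x \<in> (tr m - tr l) \<inter> (tr m - tr p)"
      by (cases x) simp
    then show ?thesis by blast
  qed
  moreover have "tr l \<noteq> tr p" using ne by (metis tr_tr)
  ultimately show False by (rule L1_VV)
qed

lemma L1:
  assumes st1: "domino_step l m" and st2: "domino_step p m" and ne: "l \<noteq> p"
  shows "domino_step (fD l p m) l \<and> domino_step (fD l p m) p \<and> gU l p (fD l p m) = m \<and>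
         sw q (fD l p m) l * sw q (fD l p m) p = sw q l m * sw q p m"
proof (cases "(m - l) \<inter> (m - p) = {}")
  case True
  have pm: "is_partition m" and pl: "is_partition l" and pp: "is_partition p"
    and sl: "l \<subseteq> m" and sp: "p \<subseteq> m" and dl: "is_domino (m - l)" and dp: "is_domino (m - p)"
    using st1 st2 by (auto simp: domino_step_def)
  have un: "m - (l \<union> p) = {}" using True by blast
  have fe: "fD l p m = l \<inter> p" unfolding fD_def un by simp
  have e1: "l - (l \<inter> p) = m - p" using True sl sp by blast
  have e2: "p - (l \<inter> p) = m - l" using True sl sp by blast
  have s1: "domino_step (l \<inter> p) l" unfolding domino_step_def e1 using partition_Int[OF pl pp] pl dp by auto
  have s2: "domino_step (l \<inter> p) p" unfolding domino_step_def e2 using partition_Int[OF pl pp] pp dl by auto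
  have g: "gU l p (l \<inter> p) = m" unfolding gU_def using True sl sp by auto
  show ?thesis unfolding fe using s1 s2 g by (simp add: sw_def e1 e2)
next
  case False
  have dl: "is_domino (m - l)" and dp: "is_domino (m - p)" using st1 st2 by (auto simp: domino_step_def)
  show ?thesis
  proof (cases "vertical_domino (m - l)")
    case vl: True
    show ?thesis
    proof (cases "vertical_domino (m - p)")
      case True
      then show ?thesis using L1_VV[OF st1 st2 vl True False ne] by simp
    next
      case hp: False
      then have "horizontal_domino (m - p)" using dp by (simp add: is_domino_def)
      then show ?thesis using L1_VH[OF st1 st2 vl _ False] by simp
    qed
  next
    case hl0: False
    then have hl: "horizontal_domino (m - l)" using dl by (simp add: is_domino_def)
    show ?thesis
    proof (cases "vertical_domino (m - p)")
      case vp: True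
      have "(m - p) \<inter> (m - l) \<noteq> {}" using False by blast
      from L1_VH[OF st2 st1 vp hl this, of q] show ?thesis
        by (simp add: fD_sym[of p l] gU_sym[of p l] mult.commute)
    next
      case False
      then have "horizontal_domino (m - p)" using dp by (simp add: is_domino_def)
      then show ?thesis using L1_HH[OF st1 st2 hl _ \<open>(m - l) \<inter> (m - p) \<noteq> {}\<close> ne] by simp
    qed
  qed
qed




lemma L2_VH:
  assumes st1: "domino_step n l" and st2: "domino_step n p"
    and v: "vertical_domino (l - n)" and h: "horizontal_domino (p - n)"
    and ov: "(l - n) \<inter> (p - n) \<noteq> {}"
  shows "domino_step l (gU l p n) \<and> domino_step p (gU l p n) \<and> fD l p (gU l p n) = n"
proof -
  obtain a b where e1: "l - n = {(a, b), (Suc a, b)}" using v by (auto simp: vertical_domino_def)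
  obtain c e where e2: "p - n = {(c, e), (c, Suc e)}" using h by (auto simp: horizontal_domino_def)
  have pn: "is_partition n" and pl: "is_partition l" and pp: "is_partition p"
    and sl: "n \<subseteq> l" and sp: "n \<subseteq> p" using st1 st2 by (auto simp: domino_step_def)
  have leq: "l = n \<union> {(a, b), (Suc a, b)}" using e1 sl by blast
  have peq: "p = n \<union> {(c, e), (c, Suc e)}" using e2 sp by blast
  have nn: "(a, b) \<notin> n" "(Suc a, b) \<notin> n" "(c, e) \<notin> n" "(c, Suc e) \<notin> n" using e1 e2 by blast+
  have "(a, b) = (c, e) \<or> (a, b) = (c, Suc e) \<or> (Suc a, b) = (c, e) \<or> (Suc a, b) = (c, Suc e)"
    using ov e1 e2 by auto
  then have ce: "c = a \<and> e = b"
  proof (elim disjE)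
    assume "(a, b) = (c, e)" then show ?thesis by simp
  next
    assume eq: "(a, b) = (c, Suc e)"
    then have "(c, Suc e) \<in> l" using leq by simp
    then have "(c, e) \<in> l" by (rule down2[OF pl])
    then show ?thesis using leq eq nn by auto
  next
    assume eq: "(Suc a, b) = (c, e)"
    then have "(Suc a, b) \<in> p" using peq by simp
    then have "(a, b) \<in> p" by (rule down1[OF pp])
    then show ?thesis using peq eq nn by auto
  next
    assume eq: "(Suc a, b) = (c, Suc e)"
    then have "(Suc a, b) \<in> p" using peq by simp
    then have "(a, b) \<in> p" by (rule down1[OF pp])
    then show ?thesis using peq eq nn by auto
  qed
  define i j where "i = a" and "j = b"
  have leq': "l = n \<union> {(i, j), (Suc i, j)}" using leq by (simp add: i_def j_def)
  have peq': "p = n \<union> {(i, j), (i, Suc j)}" using peq ce by (simp add: i_def j_def)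
  have nn': "(i, j) \<notin> n" "(Suc i, j) \<notin> n" "(i, Suc j) \<notin> n" using nn ce by (auto simp: i_def j_def)
  have nss: "(Suc i, Suc j) \<notin> n"
  proof
    assume "(Suc i, Suc j) \<in> n"
    then have "(i, j) \<in> n" using partition_down[OF pn] by (meson le_Suc_eq order_refl)
    then show False using nn' by simp
  qed
  let ?M = "l \<union> p \<union> {(Suc i, Suc j)}"
  have gM: "gU l p n = ?M"
  proof -
    have "(l \<inter> p) - n = {(i, j)}" using leq' peq' nn' by auto
    then show ?thesis unfolding gU_def by (simp add: sh_def)
  qed
  have pM: "is_partition ?M"
    unfolding is_partition_def
  proof (intro conjI allI impI)
    show "finite ?M" using pl pp by (simp add: is_partition_def)
  next
    fix x y x' y' assume xy: "(x, y) \<in> ?M" and le: "x' \<le> x" "y' \<le> y"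
    show "(x', y') \<in> ?M"
    proof (cases "(x, y) \<in> l \<union> p")
      case True
      then show ?thesis using partition_down[OF pl] partition_down[OF pp] le by blast
    next
      case False
      then have xy': "x = Suc i" "y = Suc j" using xy by auto
      show ?thesis
      proof (cases "y' \<le> j")
        case True
        then have "(x', y') \<in> l" using partition_down[OF pl, of "Suc i" j x' y'] leq' le xy' by simp
        then show ?thesis by simp
      next
        case False
        then have "y' = Suc j" using le xy' by simp
        show ?thesis
        proof (cases "x' \<le> i")
          case True
          then have "(x', y') \<in> p" using partition_down[OF pp, of i "Suc j" x' y'] peq' le xy' by simp
          then show ?thesis by simp
        next
          case False
          then have "x' = Suc i" using le xy' by simp
          then show ?thesis using \<open>y' = Suc j\<close> by simp
        qed
      qed
    qed
  qed
  have d1: "?M - l = {(i, Suc j), (Suc i, Suc j)}" using leq' peq' nn' nss by auto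
  have d2: "?M - p = {(Suc i, j), (Suc i, Suc j)}" using leq' peq' nn' nss by auto
  have s1: "domino_step l ?M" unfolding domino_step_def is_domino_def d1 using pl pM by auto
  have s2: "domino_step p ?M" unfolding domino_step_def is_domino_def d2 using pp pM by auto
  have un: "?M - (l \<union> p) = {(Suc i, Suc j)}" using leq' peq' nn' nss by auto
  have f: "fD l p ?M = n" unfolding fD_def un sh_pre using leq' peq' nn' by auto
  show ?thesis unfolding gM using s1 s2 f by simp
qed

lemma L2_VV:
  assumes st1: "domino_step n l" and st2: "domino_step n p"
    and v: "vertical_domino (l - n)" and h: "vertical_domino (p - n)"
    and ov: "(l - n) \<inter> (p - n) \<noteq> {}" and ne: "l \<noteq> p"
  shows False
proof -
  obtain a b where e1: "l - n = {(a, b), (Suc a, b)}" using v by (auto simp: vertical_domino_def)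
  obtain c e where e2: "p - n = {(c, e), (Suc c, e)}" using h by (auto simp: vertical_domino_def)
  have pn: "is_partition n" and pl: "is_partition l" and pp: "is_partition p"
    and sl: "n \<subseteq> l" and sp: "n \<subseteq> p" using st1 st2 by (auto simp: domino_step_def)
  have leq: "l = n \<union> {(a, b), (Suc a, b)}" using e1 sl by blast
  have peq: "p = n \<union> {(c, e), (Suc c, e)}" using e2 sp by blast
  have nn: "(a, b) \<notin> n" "(Suc a, b) \<notin> n" "(c, e) \<notin> n" "(Suc c, e) \<notin> n" using e1 e2 by blast+
  have "(a, b) \<noteq> (c, e)" using ne leq peq by auto
  then have "(a, b) = (Suc c, e) \<or> (Suc a, b) = (c, e)"
    using ov e1 e2 by auto
  then show False
  proof
    assume eq: "(a, b) = (Suc c, e)"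
    then have "(Suc c, e) \<in> l" using leq by simp
    then have "(c, e) \<in> l" by (rule down1[OF pl])
    then show False using leq eq nn by auto
  next
    assume eq: "(Suc a, b) = (c, e)"
    then have "(Suc a, b) \<in> p" using peq by simp
    then have "(a, b) \<in> p" by (rule down1[OF pp])
    then show False using peq eq nn by auto
  qed
qed

lemma L2_HH:
  assumes st1: "domino_step n l" and st2: "domino_step n p"
    and v: "horizontal_domino (l - n)" and h: "horizontal_domino (p - n)"
    and ov: "(l - n) \<inter> (p - n) \<noteq> {}" and ne: "l \<noteq> p"
  shows False
proof -
  have "domino_step (tr n) (tr l)" "domino_step (tr n) (tr p)" using st1 st2 by (simp_all add: tr_step)
  moreover have "vertical_domino (tr l - tr n)" "vertical_domino (tr p - tr n)"
    using v h by (simp_all add: tr_diff[symmetric] tr_vert)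
  moreover have "(tr l - tr n) \<inter> (tr p - tr n) \<noteq> {}"
  proof -
    obtain x where "x \<in> (l - n) \<inter> (p - n)" using ov by blast
    then have "prod.swap x \<in> (tr l - tr n) \<inter> (tr p - tr n)"
      by (cases x) simp
    then show ?thesis by blast
  qed
  moreover have "tr l \<noteq> tr p" using ne by (metis tr_tr)
  ultimately show False by (rule L2_VV)
qed

lemma L2:
  assumes st1: "domino_step n l" and st2: "domino_step n p" and ne: "l \<noteq> p"
  shows "domino_step l (gU l p n) \<and> domino_step p (gU l p n) \<and> fD l p (gU l p n) = n"
proof (cases "(l - n) \<inter> (p - n) = {}")
  case True
  have pn: "is_partition n" and pl: "is_partition l" and pp: "is_partition p"
    and sl: "n \<subseteq> l" and sp: "n \<subseteq> p" and dl: "is_domino (l - n)" and dp: "is_domino (p - n)"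
    using st1 st2 by (auto simp: domino_step_def)
  have ip: "l \<inter> p = n" using True sl sp by blast
  have g: "gU l p n = l \<union> p" unfolding gU_def ip by simp
  have e1: "(l \<union> p) - l = p - n" using True sl sp by blast
  have e2: "(l \<union> p) - p = l - n" using True sl sp by blast
  have s1: "domino_step l (l \<union> p)" unfolding domino_step_def e1 using partition_Un[OF pl pp] pl dp by auto
  have s2: "domino_step p (l \<union> p)" unfolding domino_step_def e2 using partition_Un[OF pl pp] pp dl by auto
  have f: "fD l p (l \<union> p) = n" unfolding fD_def ip by simp
  show ?thesis unfolding g using s1 s2 f by simp
next
  case False
  have dl: "is_domino (l - n)" and dp: "is_domino (p - n)" using st1 st2 by (auto simp: domino_step_def)
  show ?thesis
  proof (cases "vertical_domino (l - n)")
    case vl: True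
    show ?thesis
    proof (cases "vertical_domino (p - n)")
      case True
      then show ?thesis using L2_VV[OF st1 st2 vl True False ne] by simp
    next
      case hp: False
      then have "horizontal_domino (p - n)" using dp by (simp add: is_domino_def)
      then show ?thesis using L2_VH[OF st1 st2 vl _ False] by simp
    qed
  next
    case hl0: False
    then have hl: "horizontal_domino (l - n)" using dl by (simp add: is_domino_def)
    show ?thesis
    proof (cases "vertical_domino (p - n)")
      case vp: True
      have "(p - n) \<inter> (l - n) \<noteq> {}" using False by blast
      from L2_VH[OF st2 st1 vp hl this] show ?thesis
        by (simp add: fD_sym[of p l] gU_sym[of p l])
    next
      case False
      then have "horizontal_domino (p - n)" using dp by (simp add: is_domino_def)
      then show ?thesis using L2_HH[OF st1 st2 hl _ \<open>(l - n) \<inter> (p - n) \<noteq> {}\<close> ne] by simp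
    qed
  qed
qed




lemma comm:
  assumes pa: "is_partition a" and q: "q > 0"
  shows "(\<Sum>m\<in>Add a. sw q a m * (\<Sum>p\<in>Rem m. sw q p m * x p))
       = (\<Sum>n\<in>Rem a. sw q n a * (\<Sum>p\<in>Add n. sw q n p * x p)) + (1 + q) * x a"
proof -
  define S1 where "S1 = Sigma (Add a) Rem"
  define S2 where "S2 = Sigma (Rem a) Add"
  define F1 where "F1 = (\<lambda>(m, p). sw q a m * sw q p m * x p)"
  define F2 where "F2 = (\<lambda>(n, p). sw q n a * sw q n p * x p)"
  have fS1: "finite S1" unfolding S1_def using finite_Add finite_Rem by (rule finite_SigmaI)
  have fS2: "finite S2" unfolding S2_def using finite_Rem finite_Add by (rule finite_SigmaI)
  have lhs: "(\<Sum>m\<in>Add a. sw q a m * (\<Sum>p\<in>Rem m. sw q p m * x p)) = sum F1 S1"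
  proof -
    have "sum F1 S1 = (\<Sum>m\<in>Add a. \<Sum>p\<in>Rem m. sw q a m * sw q p m * x p)"
      unfolding S1_def F1_def by (rule sum.Sigma[symmetric]) (auto simp: finite_Add finite_Rem)
    then show ?thesis by (simp add: sum_distrib_left mult.assoc)
  qed
  have rhs: "(\<Sum>n\<in>Rem a. sw q n a * (\<Sum>p\<in>Add n. sw q n p * x p)) = sum F2 S2"
  proof -
    have "sum F2 S2 = (\<Sum>n\<in>Rem a. \<Sum>p\<in>Add n. sw q n a * sw q n p * x p)"
      unfolding S2_def F2_def by (rule sum.Sigma[symmetric]) (auto simp: finite_Add finite_Rem)
    then show ?thesis by (simp add: sum_distrib_left mult.assoc)
  qed
  define D1 where "D1 = (\<lambda>m. (m, a)) ` Add a"
  define O1 where "O1 = {(m, p). domino_step a m \<and> domino_step p m \<and> p \<noteq> a}"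
  define D2 where "D2 = (\<lambda>n. (n, a)) ` Rem a"
  define O2 where "O2 = {(n, p). domino_step n a \<and> domino_step n p \<and> p \<noteq> a}"
  have S1eq: "S1 = D1 \<union> O1" "D1 \<inter> O1 = {}"
  proof -
    have "S1 = {(m, p). domino_step a m \<and> domino_step p m}"
      unfolding S1_def Add_def Rem_def by blast
    moreover have "D1 = {(m, p). domino_step a m \<and> p = a}"
      unfolding D1_def Add_def by blast
    ultimately show "S1 = D1 \<union> O1" "D1 \<inter> O1 = {}" unfolding O1_def by blast+
  qed
  have S2eq: "S2 = D2 \<union> O2" "D2 \<inter> O2 = {}"
  proof -
    have "S2 = {(n, p). domino_step n a \<and> domino_step n p}"
      unfolding S2_def Add_def Rem_def by blast
    moreover have "D2 = {(n, p). domino_step n a \<and> p = a}"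
      unfolding D2_def Rem_def by blast
    ultimately show "S2 = D2 \<union> O2" "D2 \<inter> O2 = {}" unfolding O2_def by blast+
  qed
  have fin1: "finite D1" "finite O1" using fS1 S1eq(1) by (metis finite_Un)+
  have fin2: "finite D2" "finite O2" using fS2 S2eq(1) by (metis finite_Un)+
  have d1: "sum F1 D1 = (\<Sum>m\<in>Add a. (sw q a m)\<^sup>2) * x a"
    unfolding D1_def F1_def
    by (subst sum.reindex) (auto simp: inj_on_def sum_distrib_right power2_eq_square)
  have d2: "sum F2 D2 = (\<Sum>n\<in>Rem a. (sw q n a)\<^sup>2) * x a"
    unfolding D2_def F2_def
    by (subst sum.reindex) (auto simp: inj_on_def sum_distrib_right power2_eq_square)
  define h where "h = (\<lambda>(m, p). (fD a p m, p))"
  define h' where "h' = (\<lambda>(n, p). (gU a p n, p))"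
  have bij: "bij_betw h O1 O2"
  proof (rule bij_betw_byWitness[where f' = h'])
    show "\<forall>y\<in>O1. h' (h y) = y"
    proof
      fix y assume "y \<in> O1"
      then obtain m p where y: "y = (m, p)" "domino_step a m" "domino_step p m" "p \<noteq> a"
        unfolding O1_def by (cases y) simp
      show "h' (h y) = y" using L1[OF y(2) y(3), of q] y(1,4) by (auto simp: h_def h'_def)
    qed
    show "\<forall>y\<in>O2. h (h' y) = y"
    proof
      fix y assume "y \<in> O2"
      then obtain n p where y: "y = (n, p)" "domino_step n a" "domino_step n p" "p \<noteq> a"
        unfolding O2_def by (cases y) simp
      show "h (h' y) = y" using L2[OF y(2) y(3)] y(1,4) by (auto simp: h_def h'_def)
    qed
    show "h ` O1 \<subseteq> O2"
    proof
      fix z assume "z \<in> h ` O1"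
      then obtain y where "y \<in> O1" "z = h y" by blast
      then obtain m p where y: "z = h (m, p)" "domino_step a m" "domino_step p m" "p \<noteq> a"
        unfolding O1_def by (cases y) simp
      show "z \<in> O2" using L1[OF y(2) y(3), of q] y(1,4)
        unfolding O2_def by (simp add: h_def)
    qed
    show "h' ` O2 \<subseteq> O1"
    proof
      fix z assume "z \<in> h' ` O2"
      then obtain y where "y \<in> O2" "z = h' y" by blast
      then obtain n p where y: "z = h' (n, p)" "domino_step n a" "domino_step n p" "p \<noteq> a"
        unfolding O2_def by (cases y) simp
      show "z \<in> O1" using L2[OF y(2) y(3)] y(1,4)
        unfolding O1_def by (simp add: h'_def)
    qed
  qed
  have o: "sum F1 O1 = sum F2 O2"
  proof -
    have "sum F1 O1 = sum (\<lambda>y. F2 (h y)) O1"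
    proof (rule sum.cong[OF refl])
      fix y assume "y \<in> O1"
      then obtain m p where y: "y = (m, p)" "domino_step a m" "domino_step p m" "p \<noteq> a"
        unfolding O1_def by (cases y) simp
      show "F1 y = F2 (h y)" using L1[OF y(2) y(3), of q] y(1,4)
        by (auto simp: h_def F1_def F2_def)
    qed
    also have "\<dots> = sum F2 O2" by (rule sum.reindex_bij_betw[OF bij])
    finally show ?thesis .
  qed
  have "sum F1 S1 = sum F1 D1 + sum F1 O1" unfolding S1eq(1) by (rule sum.union_disjoint[OF fin1 S1eq(2)])
  moreover have "sum F2 S2 = sum F2 D2 + sum F2 O2" unfolding S2eq(1) by (rule sum.union_disjoint[OF fin2 S2eq(2)])
  ultimately show ?thesis unfolding lhs rhs d1 d2 o diag[OF pa q] by (simp add: algebra_simps)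
qed




lemma no_step_delta: "\<not> domino_step n (delta r)"
proof
  assume st: "domino_step n (delta r)"
  then have pn: "is_partition n" and sub: "n \<subseteq> delta r" and d: "is_domino (delta r - n)"
    by (auto simp: domino_step_def)
  show False
  proof (cases "vertical_domino (delta r - n)")
    case True
    then obtain i j where e: "delta r - n = {(i, j), (Suc i, j)}" by (auto simp: vertical_domino_def)
    then have "(Suc i, j) \<in> delta r" by blast
    then have "(i, Suc j) \<in> delta r" by (simp add: delta_def)
    moreover have "(i, Suc j) \<notin> delta r - n" using e by simp
    ultimately have "(i, Suc j) \<in> n" by blast
    then have "(i, j) \<in> n" by (rule down2[OF pn])
    then show False using e by blast
  next
    case False
    then obtain i j where e: "delta r - n = {(i, j), (i, Suc j)}" using d by (auto simp: is_domino_def horizontal_domino_def)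
    then have "(i, Suc j) \<in> delta r" by blast
    then have "(Suc i, j) \<in> delta r" by (simp add: delta_def)
    moreover have "(Suc i, j) \<notin> delta r - n" using e by simp
    ultimately have "(Suc i, j) \<in> n" by blast
    then have "(i, j) \<in> n" by (rule down1[OF pn])
    then show False using e by blast
  qed
qed

lemma commF:
  assumes q: "q > 0"
  shows "is_partition a \<Longrightarrow> (\<Sum>m\<in>Add a. sw q a m * dpoly r (Suc k) m q) = real (Suc k) * (1 + q) * dpoly r k a q"
proof (induction k arbitrary: a)
  case 0
  have "(\<Sum>m\<in>Add a. sw q a m * dpoly r (Suc 0) m q)
      = (\<Sum>n\<in>Rem a. sw q n a * (\<Sum>p\<in>Add n. sw q n p * dpoly r 0 p q)) + (1 + q) * dpoly r 0 a q"
    unfolding dpoly_Suc[OF q] by (rule comm[OF 0 q])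
  also have "(\<Sum>n\<in>Rem a. sw q n a * (\<Sum>p\<in>Add n. sw q n p * dpoly r 0 p q)) = 0"
  proof (rule sum.neutral, rule ballI)
    fix n assume "n \<in> Rem a"
    have "(\<Sum>p\<in>Add n. sw q n p * dpoly r 0 p q) = 0"
    proof (rule sum.neutral, rule ballI)
      fix p assume "p \<in> Add n"
      then have "p \<noteq> delta r" using no_step_delta by (auto simp: Add_def)
      then show "sw q n p * dpoly r 0 p q = 0" by (simp add: dpoly_0[OF q])
    qed
    then show "sw q n a * (\<Sum>p\<in>Add n. sw q n p * dpoly r 0 p q) = 0" by simp
  qed
  finally show ?case by simp
next
  case (Suc k)
  have "(\<Sum>m\<in>Add a. sw q a m * dpoly r (Suc (Suc k)) m q)
      = (\<Sum>n\<in>Rem a. sw q n a * (\<Sum>p\<in>Add n. sw q n p * dpoly r (Suc k) p q)) + (1 + q) * dpoly r (Suc k) a q"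
    unfolding dpoly_Suc[OF q, of r "Suc k"] by (rule comm[OF Suc.prems q])
  also have "(\<Sum>n\<in>Rem a. sw q n a * (\<Sum>p\<in>Add n. sw q n p * dpoly r (Suc k) p q))
      = (\<Sum>n\<in>Rem a. sw q n a * (real (Suc k) * (1 + q) * dpoly r k n q))"
  proof (rule sum.cong[OF refl])
    fix n assume "n \<in> Rem a"
    then have "is_partition n" by (simp add: Rem_def domino_step_def)
    then show "sw q n a * (\<Sum>p\<in>Add n. sw q n p * dpoly r (Suc k) p q) = sw q n a * (real (Suc k) * (1 + q) * dpoly r k n q)"
      using Suc.IH by simp
  qed
  also have "\<dots> = real (Suc k) * (1 + q) * dpoly r (Suc k) a q"
    unfolding dpoly_Suc[OF q, of r k] by (simp add: sum_distrib_left algebra_simps)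
  finally show ?case by (simp add: algebra_simps)
qed

lemma delta_P0: "delta r \<in> P r 0"
  unfolding P_def has_2core_def using partition_delta by simp

lemma S0: assumes q: "q > 0" shows "(\<Sum>l\<in>P r 0. (dpoly r 0 l q)\<^sup>2) = 1"
proof -
  have "(\<Sum>l\<in>P r 0. (dpoly r 0 l q)\<^sup>2) = (\<Sum>l\<in>P r 0. if l = delta r then 1 else 0)"
    by (rule sum.cong) (auto simp: dpoly_0[OF q])
  also have "\<dots> = 1" using finite_P delta_P0 by (simp add: sum.delta)
  finally show ?thesis .
qed

lemma SSuc:
  assumes q: "q > 0"
  shows "(\<Sum>m\<in>P r (Suc n). (dpoly r (Suc n) m q)\<^sup>2) = real (Suc n) * (1 + q) * (\<Sum>l\<in>P r n. (dpoly r n l q)\<^sup>2)"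
proof -
  let ?F = "\<lambda>k l. dpoly r k l q"
  let ?g = "\<lambda>m l. if domino_step l m then ?F (Suc n) m * (sw q l m * ?F n l) else 0"
  have "(\<Sum>m\<in>P r (Suc n). (?F (Suc n) m)\<^sup>2) = (\<Sum>m\<in>P r (Suc n). \<Sum>l\<in>P r n. ?g m l)"
  proof (rule sum.cong[OF refl])
    fix m assume "m \<in> P r (Suc n)"
    have "(?F (Suc n) m)\<^sup>2 = ?F (Suc n) m * (\<Sum>l\<in>Rem m. sw q l m * ?F n l)"
      by (simp add: power2_eq_square dpoly_Suc[OF q])
    also have "(\<Sum>l\<in>Rem m. sw q l m * ?F n l) = (\<Sum>l\<in>Rem m \<inter> P r n. sw q l m * ?F n l)"
      by (rule sum.mono_neutral_right) (auto simp: finite_Rem dpoly_outside)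
    also have "\<dots> = (\<Sum>l\<in>P r n. if domino_step l m then sw q l m * ?F n l else 0)"
      by (subst Int_commute, subst sum.inter_restrict[OF finite_P]) (simp add: Rem_def)
    finally show "(?F (Suc n) m)\<^sup>2 = (\<Sum>l\<in>P r n. ?g m l)"
      by (simp add: sum_distrib_left if_distrib cong: if_cong)
  qed
  also have "\<dots> = (\<Sum>l\<in>P r n. \<Sum>m\<in>P r (Suc n). ?g m l)" by (rule sum.swap)
  also have "\<dots> = (\<Sum>l\<in>P r n. ?F n l * (real (Suc n) * (1 + q) * ?F n l))"
  proof (rule sum.cong[OF refl])
    fix l assume lP: "l \<in> P r n"
    then have pl: "is_partition l" by (simp add: P_def)
    have "(\<Sum>m\<in>P r (Suc n). ?g m l) = (\<Sum>m\<in>P r (Suc n). if m \<in> Add l then ?F n l * (sw q l m * ?F (Suc n) m) else 0)"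
      by (rule sum.cong[OF refl]) (simp add: Add_def)
    also have "\<dots> = (\<Sum>m\<in>P r (Suc n) \<inter> Add l. ?F n l * (sw q l m * ?F (Suc n) m))"
      by (rule sum.inter_restrict[OF finite_P, symmetric])
    also have "P r (Suc n) \<inter> Add l = Add l" using Add_P[OF lP] by blast
    also have "(\<Sum>m\<in>Add l. ?F n l * (sw q l m * ?F (Suc n) m)) = ?F n l * (\<Sum>m\<in>Add l. sw q l m * ?F (Suc n) m)"
      by (simp add: sum_distrib_left)
    also have "\<dots> = ?F n l * (real (Suc n) * (1 + q) * ?F n l)"
      using commF[OF q pl] by simp
    finally show "(\<Sum>m\<in>P r (Suc n). ?g m l) = ?F n l * (real (Suc n) * (1 + q) * ?F n l)" .
  qed
  also have "\<dots> = real (Suc n) * (1 + q) * (\<Sum>l\<in>P r n. (?F n l)\<^sup>2)"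
    by (simp add: sum_distrib_left power2_eq_square algebra_simps)
  finally show ?thesis .
qed

theorem proposition3p13:
  fixes n r :: nat and q :: real
  assumes "n \<ge> 1" and "q > 0"
  shows "(\<Sum>lam\<in>P r n. (dpoly r n lam q)\<^sup>2) = (1 + q) ^ n * fact n"
proof -
  have "(\<Sum>lam\<in>P r k. (dpoly r k lam q)\<^sup>2) = (1 + q) ^ k * fact k" for k
  proof (induction k)
    case 0 then show ?case using S0[OF assms(2)] by simp
  next
    case (Suc k) then show ?case using SSuc[OF assms(2), of r k] by (simp add: algebra_simps)
  qed
  then show ?thesis .
qed


end
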